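(* Let $X$ and $Y$ be mm-spaces. Then \[ d_{\mathrm{Eur}}(X,Y)=\min_{\pi\in\Pi(m_X,m_Y)}\ \min_{\varepsilon\ge0}\max\{\varepsilon,\ (\pi\otimes\pi)(|d_X-d_Y|>\varepsilon)\}; \] in particular both minima are attained.
   Context: An mm-space is a complete separable metric space $(X,d_X)$ with a Borel probability measure $m_X$. $\Pi(m_X,m_Y)$: Borel probability measures on $X\times Y$ with marginals $m_X,m_Y$. $\pi\otimes\pi$ is the product measure on $X\times Y\times X\times Y$, and $\{|d_X-d_Y|>\varepsilon\}:=\{(x_1,y_1,x_2,y_2):|d_X(x_1,x_2)-d_Y(y_1,y_2)|>\varepsilon\}$. The Eurandom distance is $d_{\mathrm{Eur}}(X,Y):=\inf_{\pi\in\Pi(m_X,m_Y)}\inf_{\varepsilon\ge0}\max\{\varepsilon,(\pi\otimes\pi)(|d_X-d_Y|>\varepsilon)\}$. *)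

theory Defs
  imports "HOL-Probability.Probability"
begin

definition mm_space :: "('a::polish_space) measure \<Rightarrow> bool" where
  "mm_space M \<longleftrightarrow> prob_space M \<and> sets M = sets (borel :: 'a measure)"

definition couplings ::
  "('a::polish_space) measure \<Rightarrow> ('b::polish_space) measure \<Rightarrow> ('a \<times> 'b) measure set" where
  "couplings mX mY = {\<pi>. prob_space \<pi> \<and> sets \<pi> = sets (borel :: ('a \<times> 'b) measure)
      \<and> distr \<pi> mX fst = mX \<and> distr \<pi> mY snd = mY}"

definition distortion_gt :: "real \<Rightarrow> (('a::metric_space \<times> 'b::metric_space) \<times> ('a \<times> 'b)) set" where
  "distortion_gt \<epsilon> = {((x1, y1), (x2, y2)). \<bar>dist x1 x2 - dist y1 y2\<bar> > \<epsilon>}"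

definition eur_cost :: "(('a::metric_space) \<times> ('b::metric_space)) measure \<Rightarrow> real \<Rightarrow> real" where
  "eur_cost \<pi> \<epsilon> = max \<epsilon> (measure (\<pi> \<Otimes>\<^sub>M \<pi>) (distortion_gt \<epsilon>))"

definition d_Eur :: "('a::polish_space) measure \<Rightarrow> ('b::polish_space) measure \<Rightarrow> real" where
  "d_Eur mX mY = (INF \<pi> \<in> couplings mX mY. INF \<epsilon> \<in> {0..}. eur_cost \<pi> \<epsilon>)"

end

theory Submission
  imports Defs "HOL-Library.Diagonal_Subsequence"
begin


lemma diag_convergent:
  fixes g :: "nat \<Rightarrow> nat \<Rightarrow> real"
  assumes bdd: "\<And>i n. g i n \<in> {0..1}"
  shows "\<exists>d. strict_mono d \<and> (\<forall>i. convergent (\<lambda>k. g i (d k)))"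
proof -
  let ?P = "\<lambda>n. \<lambda>s. convergent (\<lambda>k. g n (s k))"
  interpret nat: subseqs ?P
  proof (unfold convergent_def, unfold subseqs_def, auto)
    fix n :: nat and s :: "nat \<Rightarrow> nat" assume s: "strict_mono s"
    have "\<And>k. g n (s k) \<in> {0..1}" using bdd by auto
    then have "\<exists>l s'. strict_mono s' \<and> ((\<lambda>k. g n (s k)) \<circ> s') \<longlonglongrightarrow> l"
      using compact_Icc compact_imp_seq_compact seq_compactE by metis
    thus "\<exists>s'. strict_mono (s'::nat\<Rightarrow>nat) \<and> (\<exists>l. (\<lambda>k. g n (s (s' k))) \<longlonglongrightarrow> l)"
      by (auto simp: comp_def)
  qed
  define d where "d = nat.diagseq"
  have subseq: "strict_mono d"
    unfolding d_def using nat.subseq_diagseq by auto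
  have rat_cnv: "?P n d" for n
  proof -
    have Pn_seqseq: "?P n (nat.seqseq (Suc n))"
      by (rule nat.seqseq_holds)
    have 1: "(\<lambda>k. g n ((nat.seqseq (Suc n) \<circ> (\<lambda>k. nat.fold_reduce (Suc n) k
      (Suc n + k))) k)) = (\<lambda>k. g n (nat.seqseq (Suc n) k)) \<circ>
      (\<lambda>k. nat.fold_reduce (Suc n) k (Suc n + k))"
      by auto
    have 2: "?P n (d \<circ> ((+) (Suc n)))"
      unfolding d_def nat.diagseq_seqseq 1
      by (intro convergent_subseq_convergent Pn_seqseq nat.subseq_diagonal_rest)
    then obtain L where 3: "(\<lambda>na. g n (d (na + Suc n))) \<longlonglongrightarrow> L"
      by (auto simp: add.commute dest: convergentD)
    then have "(\<lambda>k. g n (d k)) \<longlonglongrightarrow> L"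
      by (rule LIMSEQ_offset)
    then show ?thesis
      by (auto simp: convergent_def)
  qed
  show ?thesis using subseq rat_cnv by blast
qed



locale prok_base =
  fixes P :: "nat \<Rightarrow> 'c::{metric_space,second_countable_topology} measure"
    and K :: "nat \<Rightarrow> 'c set" and B :: "'c set set"
  assumes prob: "\<And>n. prob_space (P n)" and sets_P: "\<And>n. sets (P n) = sets borel"
    and K_compact: "\<And>i. compact (K i)" and K_inc: "incseq K"
    and K_meas: "\<And>i n. measure (P n) (K i) \<ge> 1 - 1 / Suc i"
    and B_count: "countable B" and B_basis: "topological_basis B"
begin

definition "HH0 = (\<lambda>(A,i). closure A \<inter> K i) ` (B \<times> UNIV)"
definition "HH = Union ` {S. finite S \<and> S \<subseteq> HH0}"

lemma countable_HH: "countable HH"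
  unfolding HH_def HH0_def
  by (intro countable_image countable_Collect_finite_subset countable_SIGMA B_count) auto

lemma HH_empty: "{} \<in> HH"
  unfolding HH_def by (auto intro!: image_eqI[where x="{}"])

lemma HH_Un: "H \<in> HH \<Longrightarrow> H' \<in> HH \<Longrightarrow> H \<union> H' \<in> HH"
proof -
  assume "H \<in> HH" "H' \<in> HH"
  then obtain S S' where "finite S" "S \<subseteq> HH0" "H = \<Union>S" "finite S'" "S' \<subseteq> HH0" "H' = \<Union>S'"
    unfolding HH_def by auto
  then show ?thesis unfolding HH_def by (auto intro!: image_eqI[where x="S \<union> S'"])
qed

lemma HH0_compact: "H \<in> HH0 \<Longrightarrow> compact H"
  unfolding HH0_def using K_compact by (auto intro!: closed_Int_compact)

lemma HH_compact: "H \<in> HH \<Longrightarrow> compact H"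
  unfolding HH_def using HH0_compact by (auto intro!: compact_Union)

lemma HH_closed: "H \<in> HH \<Longrightarrow> closed H"
  using HH_compact compact_imp_closed by blast

lemma HH_sets: "H \<in> HH \<Longrightarrow> H \<in> sets (P n)"
  using HH_closed sets_P by auto

lemma HH_in_K: "H \<in> HH \<Longrightarrow> \<exists>i. H \<subseteq> K i"
proof -
  assume "H \<in> HH"
  then obtain S where S: "finite S" "S \<subseteq> HH0" "H = \<Union>S" unfolding HH_def by auto
  have "S \<subseteq> HH0 \<longrightarrow> (\<exists>i. \<Union>S \<subseteq> K i)" using S(1)
  proof (induction S rule: finite_induct)
    case empty then show ?case by auto
  next
    case (insert x F)
    show ?case
    proof
      assume a: "insert x F \<subseteq> HH0"
      then obtain i where i: "\<Union>F \<subseteq> K i" using insert by auto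
      from a obtain A j where "x = closure A \<inter> K j" unfolding HH0_def by auto
      then have "x \<subseteq> K j" by auto
      moreover have "K i \<subseteq> K (max i j)" "K j \<subseteq> K (max i j)"
        using K_inc by (auto simp: incseq_def)
      ultimately show "\<exists>i. \<Union>(insert x F) \<subseteq> K i" using i by (intro exI[of _ "max i j"]) auto
    qed
  qed
  then show ?thesis using S by auto
qed

lemma approx:
  assumes F: "closed F" "F \<subseteq> K i" and G: "open G" "F \<subseteq> G"
  shows "\<exists>H\<in>HH. F \<subseteq> H \<and> H \<subseteq> G"
proof -
  let ?C = "{A\<in>B. closure A \<subseteq> G}"
  have cover: "F \<subseteq> \<Union>?C"
  proof
    fix x assume "x \<in> F"
    then have "x \<in> G" using G by auto
    then obtain e where e: "e > 0" "ball x e \<subseteq> G" using G(1) openE by blast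
    obtain A where A: "A \<in> B" "x \<in> A" "A \<subseteq> ball x (e/2)"
      using topological_basisE[OF B_basis open_ball[of x "e/2"], of x] e by auto
    have "closure A \<subseteq> cball x (e/2)"
      using A(3) by (intro closure_minimal) auto
    also have "\<dots> \<subseteq> ball x e" using e by (auto simp: subset_eq)
    finally show "x \<in> \<Union>?C" using A e by auto
  qed
  have "compact F"
  proof -
    have "compact (F \<inter> K i)" using F K_compact by (intro closed_Int_compact) auto
    then show ?thesis using F by (simp add: Int_absorb2)
  qed
  then obtain D where D: "D \<subseteq> ?C" "finite D" "F \<subseteq> \<Union>D"
  proof (rule compactE[OF _ cover])
    show "open A" if "A \<in> ?C" for A using that B_basis topological_basis_open by blast
  qed (use \<open>compact F\<close> in blast)+
  let ?H = "\<Union>((\<lambda>A. closure A \<inter> K i) ` D)"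
  have "?H \<in> HH"
    unfolding HH_def HH0_def using D
    by (intro image_eqI[where x="(\<lambda>A. closure A \<inter> K i) ` D"]) auto
  moreover have "F \<subseteq> ?H"
  proof
    fix x assume "x \<in> F"
    then obtain A where "A \<in> D" "x \<in> A" using D by auto
    then show "x \<in> ?H" using \<open>x \<in> F\<close> F closure_subset by blast
  qed
  moreover have "?H \<subseteq> G" using D by auto
  ultimately show ?thesis by blast
qed

end


locale prok = prok_base +
  fixes r :: "nat \<Rightarrow> nat"
  assumes r_mono: "strict_mono r"
    and conv: "\<And>H. H \<in> HH \<Longrightarrow> convergent (\<lambda>n. measure (P (r n)) H)"
begin

definition "\<alpha> H = lim (\<lambda>n. measure (P (r n)) H)"

lemma \<alpha>_lim: "H \<in> HH \<Longrightarrow> (\<lambda>n. measure (P (r n)) H) \<longlonglongrightarrow> \<alpha> H"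
  unfolding \<alpha>_def using conv convergent_LIMSEQ_iff by blast

lemma \<alpha>_nonneg: "H \<in> HH \<Longrightarrow> 0 \<le> \<alpha> H"
  by (rule LIMSEQ_le_const[OF \<alpha>_lim]) auto

lemma \<alpha>_le1: "H \<in> HH \<Longrightarrow> \<alpha> H \<le> 1"
  by (rule LIMSEQ_le_const2[OF \<alpha>_lim]) (auto intro!: prob_space.prob_le_1 prob)

lemma \<alpha>_mono: "H \<in> HH \<Longrightarrow> H' \<in> HH \<Longrightarrow> H \<subseteq> H' \<Longrightarrow> \<alpha> H \<le> \<alpha> H'"
proof -
  assume a: "H \<in> HH" "H' \<in> HH" "H \<subseteq> H'"
  have "measure (P (r n)) H \<le> measure (P (r n)) H'" for n
  proof -
    interpret prob_space "P (r n)" by (rule prob)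
    show ?thesis using a HH_sets by (intro finite_measure_mono) auto
  qed
  then show ?thesis by (intro LIMSEQ_le[OF \<alpha>_lim \<alpha>_lim] a) auto
qed

lemma \<alpha>_subadd: "H \<in> HH \<Longrightarrow> H' \<in> HH \<Longrightarrow> \<alpha> (H \<union> H') \<le> \<alpha> H + \<alpha> H'"
proof -
  assume a: "H \<in> HH" "H' \<in> HH"
  have "measure (P (r n)) (H \<union> H') \<le> measure (P (r n)) H + measure (P (r n)) H'" for n
  proof -
    interpret prob_space "P (r n)" by (rule prob)
    show ?thesis using a HH_sets by (intro measure_Un_le) auto
  qed
  then show ?thesis
    by (intro LIMSEQ_le[OF \<alpha>_lim tendsto_add[OF \<alpha>_lim \<alpha>_lim]] a HH_Un) auto
qed

lemma \<alpha>_add: "H \<in> HH \<Longrightarrow> H' \<in> HH \<Longrightarrow> H \<inter> H' = {} \<Longrightarrow> \<alpha> (H \<union> H') = \<alpha> H + \<alpha> H'"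
proof -
  assume a: "H \<in> HH" "H' \<in> HH" "H \<inter> H' = {}"
  have "measure (P (r n)) (H \<union> H') = measure (P (r n)) H + measure (P (r n)) H'" for n
  proof -
    interpret prob_space "P (r n)" by (rule prob)
    show ?thesis using a HH_sets by (intro finite_measure_Union) auto
  qed
  then have "(\<lambda>n. measure (P (r n)) (H \<union> H')) \<longlonglongrightarrow> \<alpha> H + \<alpha> H'"
    using tendsto_add[OF \<alpha>_lim \<alpha>_lim, OF a(1,2)] by simp
  then show ?thesis using \<alpha>_lim[OF HH_Un[OF a(1,2)]] LIMSEQ_unique by blast
qed

lemma \<alpha>_empty: "\<alpha> {} = 0"
  unfolding \<alpha>_def by simp

definition "\<beta> G = (SUP H\<in>{H\<in>HH. H \<subseteq> G}. ennreal (\<alpha> H))"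
definition "\<mu>o M = (INF G\<in>{G. open G \<and> M \<subseteq> G}. \<beta> G)"

lemma \<beta>_mono: "G \<subseteq> G' \<Longrightarrow> \<beta> G \<le> \<beta> G'"
  unfolding \<beta>_def by (rule SUP_subset_mono) auto

lemma \<beta>_le1: "\<beta> G \<le> 1"
  unfolding \<beta>_def using \<alpha>_le1 by (intro SUP_least) auto

lemma \<beta>_fin: "\<beta> G \<noteq> \<infinity>"
  using \<beta>_le1[of G] by (auto simp: top_unique)

lemma \<alpha>_le_\<beta>: "H \<in> HH \<Longrightarrow> H \<subseteq> G \<Longrightarrow> ennreal (\<alpha> H) \<le> \<beta> G"
  unfolding \<beta>_def by (rule SUP_upper) auto

lemma \<beta>_empty: "\<beta> {} = 0"
proof -
  have "{H \<in> HH. H \<subseteq> {}} = {{}}" using HH_empty by auto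
  then show ?thesis unfolding \<beta>_def by (simp add: \<alpha>_empty)
qed

lemma \<mu>o_le_\<beta>: "open G \<Longrightarrow> M \<subseteq> G \<Longrightarrow> \<mu>o M \<le> \<beta> G"
  unfolding \<mu>o_def by (rule INF_lower) auto

lemma \<mu>o_open: "open G \<Longrightarrow> \<mu>o G = \<beta> G"
  by (rule antisym[OF \<mu>o_le_\<beta>]) (auto simp: \<mu>o_def intro!: INF_greatest \<beta>_mono)

lemma \<mu>o_le1: "\<mu>o M \<le> 1"
  using \<mu>o_le_\<beta>[of UNIV M] \<beta>_le1[of UNIV] by auto

lemma \<beta>_Un: assumes "open G1" "open G2" shows "\<beta> (G1 \<union> G2) \<le> \<beta> G1 + \<beta> G2"
proof (cases "G1 = UNIV \<or> G2 = UNIV")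
  case True
  then show ?thesis
  proof
    assume "G1 = UNIV" then show ?thesis by (simp add: add_increasing2)
  next
    assume "G2 = UNIV" then show ?thesis by (simp add: add_increasing)
  qed
next
  case False
  then have ne: "- G1 \<noteq> {}" "- G2 \<noteq> {}" by auto
  show ?thesis unfolding \<beta>_def[of "G1 \<union> G2"]
  proof (rule SUP_least)
    fix H assume "H \<in> {H\<in>HH. H \<subseteq> G1 \<union> G2}"
    then have H: "H \<in> HH" "H \<subseteq> G1 \<union> G2" by auto
    obtain i where Hi: "H \<subseteq> K i" using HH_in_K[OF H(1)] by auto
    define F1 where "F1 = H \<inter> {x. infdist x (- G2) \<le> infdist x (- G1)}"
    define F2 where "F2 = H \<inter> {x. infdist x (- G1) \<le> infdist x (- G2)}"
    have cont: "continuous_on UNIV (\<lambda>x. infdist x (- G1))" "continuous_on UNIV (\<lambda>x. infdist x (- G2))"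
      by (intro continuous_on_infdist continuous_on_id)+
    have "closed F1" "closed F2" unfolding F1_def F2_def
      using HH_closed[OF H(1)] cont by (auto intro!: closed_Int closed_Collect_le)
    have "F1 \<subseteq> G1"
    proof
      fix x assume x: "x \<in> F1"
      show "x \<in> G1"
      proof (rule ccontr)
        assume "x \<notin> G1"
        then have "infdist x (- G1) = 0" by (intro infdist_zero) auto
        then have "infdist x (- G2) = 0" using x infdist_nonneg[of x "-G2"] unfolding F1_def by auto
        then have "x \<in> closure (- G2)" using in_closure_iff_infdist_zero[OF ne(2)] by auto
        then have "x \<in> - G2" using assms(2) by (simp add: closed_Compl closure_closed)
        then show False using x H(2) \<open>x \<notin> G1\<close> unfolding F1_def by auto
      qed
    qed
    have "F2 \<subseteq> G2"
    proof
      fix x assume x: "x \<in> F2"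
      show "x \<in> G2"
      proof (rule ccontr)
        assume "x \<notin> G2"
        then have "infdist x (- G2) = 0" by (intro infdist_zero) auto
        then have "infdist x (- G1) = 0" using x infdist_nonneg[of x "-G1"] unfolding F2_def by auto
        then have "x \<in> closure (- G1)" using in_closure_iff_infdist_zero[OF ne(1)] by auto
        then have "x \<in> - G1" using assms(1) by (simp add: closed_Compl closure_closed)
        then show False using x H(2) \<open>x \<notin> G2\<close> unfolding F2_def by auto
      qed
    qed
    obtain H1 where H1: "H1 \<in> HH" "F1 \<subseteq> H1" "H1 \<subseteq> G1"
      using approx[OF \<open>closed F1\<close> _ assms(1) \<open>F1 \<subseteq> G1\<close>, of i] Hi unfolding F1_def by auto
    obtain H2 where H2: "H2 \<in> HH" "F2 \<subseteq> H2" "H2 \<subseteq> G2"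
      using approx[OF \<open>closed F2\<close> _ assms(2) \<open>F2 \<subseteq> G2\<close>, of i] Hi unfolding F2_def by auto
    have "H \<subseteq> H1 \<union> H2"
    proof
      fix x assume "x \<in> H"
      show "x \<in> H1 \<union> H2"
      proof (cases "infdist x (- G2) \<le> infdist x (- G1)")
        case True then show ?thesis using \<open>x \<in> H\<close> H1 unfolding F1_def by auto
      next
        case False then show ?thesis using \<open>x \<in> H\<close> H2 unfolding F2_def by auto
      qed
    qed
    then have "\<alpha> H \<le> \<alpha> (H1 \<union> H2)" using H H1 H2 by (intro \<alpha>_mono HH_Un) auto
    also have "\<dots> \<le> \<alpha> H1 + \<alpha> H2" using H1 H2 by (intro \<alpha>_subadd) auto
    finally have "ennreal (\<alpha> H) \<le> ennreal (\<alpha> H1 + \<alpha> H2)"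
      by (rule ennreal_leI)
    also have "\<dots> = ennreal (\<alpha> H1) + ennreal (\<alpha> H2)"
      using H1 H2 \<alpha>_nonneg by (intro ennreal_plus) auto
    also have "\<dots> \<le> \<beta> G1 + \<beta> G2"
      using H1 H2 by (intro add_mono \<alpha>_le_\<beta>) auto
    finally show "ennreal (\<alpha> H) \<le> \<beta> G1 + \<beta> G2" .
  qed
qed


lemma \<beta>_UN_finite: "(\<And>i::nat. open (G i)) \<Longrightarrow> \<beta> (\<Union>i<(N::nat). G i) \<le> (\<Sum>i<N. \<beta> (G i))"
proof (induction N)
  case 0 then show ?case by (simp add: \<beta>_empty)
next
  case (Suc N)
  have "(\<Union>i<Suc N. G i) = (\<Union>i<N. G i) \<union> G N" by (auto simp: lessThan_Suc)
  then have "\<beta> (\<Union>i<Suc N. G i) \<le> \<beta> (\<Union>i<N. G i) + \<beta> (G N)"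
    using Suc.prems by (simp add: \<beta>_Un open_UN)
  also have "\<dots> \<le> (\<Sum>i<N. \<beta> (G i)) + \<beta> (G N)" using Suc by (intro add_mono) auto
  finally show ?case by simp
qed

lemma \<beta>_UN: assumes "\<And>i. open (G i)" shows "\<beta> (\<Union>i. G i) \<le> (\<Sum>i. \<beta> (G i))"
  unfolding \<beta>_def[of "\<Union>i. G i"]
proof (rule SUP_least)
  fix H assume "H \<in> {H\<in>HH. H \<subseteq> (\<Union>i. G i)}"
  then have H: "H \<in> HH" "H \<subseteq> (\<Union>i. G i)" by auto
  obtain C where C: "C \<subseteq> UNIV" "finite C" "H \<subseteq> (\<Union>i\<in>C. G i)"
    using compactE_image[OF HH_compact[OF H(1)], of UNIV G] assms H(2) by auto
  obtain N where "C \<subseteq> {..<N}" using finite_nat_bounded[OF C(2)] by auto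
  then have "H \<subseteq> (\<Union>i<N. G i)" using C by blast
  then have "ennreal (\<alpha> H) \<le> \<beta> (\<Union>i<N. G i)" using H by (intro \<alpha>_le_\<beta>)
  also have "\<dots> \<le> (\<Sum>i<N. \<beta> (G i))" using assms by (rule \<beta>_UN_finite)
  also have "\<dots> \<le> (\<Sum>i. \<beta> (G i))" by (intro sum_le_suminf) auto
  finally show "ennreal (\<alpha> H) \<le> (\<Sum>i. \<beta> (G i))" .
qed

lemma \<mu>o_empty: "\<mu>o {} = 0"
  using \<mu>o_le_\<beta>[of "{}" "{}"] \<beta>_empty by simp

lemma \<mu>o_mono: "A \<subseteq> A' \<Longrightarrow> \<mu>o A \<le> \<mu>o A'"
  unfolding \<mu>o_def by (rule INF_superset_mono) auto

lemma \<mu>o_UN: "\<mu>o (\<Union>i. A i) \<le> (\<Sum>i. \<mu>o (A i))"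
proof (rule ennreal_le_epsilon)
  fix e :: real assume "0 < e"
  have "\<exists>G. open G \<and> A i \<subseteq> G \<and> \<beta> G < \<mu>o (A i) + ennreal (e * (1/2)^Suc i)" for i
  proof -
    have "\<mu>o (A i) \<noteq> \<infinity>" using \<mu>o_le1[of "A i"] by (auto simp: top_unique)
    then show ?thesis
      using INF_approx_ennreal[of "e * (1/2)^Suc i" "\<mu>o (A i)" \<beta> "{G. open G \<and> A i \<subseteq> G}"] \<open>0 < e\<close>
      unfolding \<mu>o_def by auto
  qed
  then obtain G where G: "\<And>i. open (G i)" "\<And>i. A i \<subseteq> G i"
      "\<And>i. \<beta> (G i) < \<mu>o (A i) + ennreal (e * (1/2)^Suc i)"
    by metis
  have "\<mu>o (\<Union>i. A i) \<le> \<beta> (\<Union>i. G i)" using G by (intro \<mu>o_le_\<beta>) auto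
  also have "\<dots> \<le> (\<Sum>i. \<beta> (G i))" using G by (intro \<beta>_UN)
  also have "\<dots> \<le> (\<Sum>i. \<mu>o (A i) + ennreal (e * (1/2)^Suc i))"
    using G by (intro suminf_le) (auto intro: less_imp_le)
  also have "\<dots> = (\<Sum>i. \<mu>o (A i)) + (\<Sum>i. ennreal (e * (1/2)^Suc i))"
    by (rule suminf_add[symmetric]) auto
  also have "(\<Sum>i. ennreal (e * (1/2)^Suc i)) = ennreal (\<Sum>i. e * (1/2)^Suc i)"
    using \<open>0 < e\<close> by (intro suminf_ennreal2 summable_mult sums_summable[OF power_half_series]) auto
  also have "(\<Sum>i. e * (1/2)^Suc i) = e"
    using sums_mult[OF power_half_series, of e] by (simp add: sums_iff)
  finally show "\<mu>o (\<Union>i. A i) \<le> (\<Sum>i. \<mu>o (A i)) + ennreal e" .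
qed

lemma outer: "outer_measure_space (Pow UNIV) \<mu>o"
  unfolding outer_measure_space_def positive_def increasing_def countably_subadditive_def
  using \<mu>o_empty \<mu>o_mono \<mu>o_UN by auto

lemma key:
  assumes F: "closed F" and G: "open G"
  shows "\<mu>o (F \<inter> G) + \<mu>o ((UNIV - F) \<inter> G) \<le> \<beta> G"
proof (rule ennreal_le_epsilon)
  fix e :: real assume "0 < e"
  define G3 where "G3 = G - F"
  have "open G3" unfolding G3_def using F G by auto
  obtain H3 where H3: "H3 \<in> {H\<in>HH. H \<subseteq> G3}" "\<beta> G3 < ennreal (\<alpha> H3) + ennreal (e/2)"
    using SUP_approx_ennreal[of "e/2" "{H\<in>HH. H \<subseteq> G3}" "\<beta> G3" "\<lambda>H. ennreal (\<alpha> H)"]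
      \<open>0 < e\<close> HH_empty \<beta>_fin unfolding \<beta>_def by auto
  define G4 where "G4 = G - H3"
  have "open G4" unfolding G4_def using G H3 HH_closed by auto
  obtain H4 where H4: "H4 \<in> {H\<in>HH. H \<subseteq> G4}" "\<beta> G4 < ennreal (\<alpha> H4) + ennreal (e/2)"
    using SUP_approx_ennreal[of "e/2" "{H\<in>HH. H \<subseteq> G4}" "\<beta> G4" "\<lambda>H. ennreal (\<alpha> H)"]
      \<open>0 < e\<close> HH_empty \<beta>_fin unfolding \<beta>_def by auto
  have "\<mu>o (F \<inter> G) \<le> \<beta> G4"
    using H3 \<open>open G4\<close> unfolding G4_def G3_def by (intro \<mu>o_le_\<beta>) auto
  moreover have "\<mu>o ((UNIV - F) \<inter> G) = \<beta> G3"
    using \<mu>o_open[OF \<open>open G3\<close>] unfolding G3_def by (simp add: Int_commute Diff_eq)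
  ultimately have "\<mu>o (F \<inter> G) + \<mu>o ((UNIV - F) \<inter> G) \<le> \<beta> G4 + \<beta> G3"
    by (intro add_mono) auto
  also have "\<dots> \<le> (ennreal (\<alpha> H4) + ennreal (e/2)) + (ennreal (\<alpha> H3) + ennreal (e/2))"
    using H3 H4 by (intro add_mono less_imp_le) auto
  also have "\<dots> = ennreal (\<alpha> H3 + \<alpha> H4) + ennreal e"
    using H3 H4 \<alpha>_nonneg \<open>0 < e\<close>
    by (simp add: ennreal_plus[symmetric] del: ennreal_plus)
  also have "\<alpha> H3 + \<alpha> H4 = \<alpha> (H3 \<union> H4)"
    using H3 H4 unfolding G4_def by (intro \<alpha>_add[symmetric]) auto
  also have "ennreal (\<alpha> (H3 \<union> H4)) \<le> \<beta> G"
    using H3 H4 unfolding G3_def G4_def by (intro \<alpha>_le_\<beta> HH_Un) auto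
  finally show "\<mu>o (F \<inter> G) + \<mu>o ((UNIV - F) \<inter> G) \<le> \<beta> G + ennreal e"
    by (simp add: add_right_mono)
qed


lemma \<mu>o_Un: "\<mu>o (A \<union> A') \<le> \<mu>o A + \<mu>o A'"
proof -
  define S where "S = (\<lambda>i::nat. if i = 0 then A else if i = 1 then A' else {})"
  have "A \<union> A' = (\<Union>i. S i)" unfolding S_def by (auto split: if_splits)
  then have "\<mu>o (A \<union> A') \<le> (\<Sum>i. \<mu>o (S i))" using \<mu>o_UN by simp
  also have "(\<Sum>i. \<mu>o (S i)) = (\<Sum>i\<in>{0,1}. \<mu>o (S i))"
    by (rule suminf_finite) (auto simp: S_def \<mu>o_empty)
  also have "\<dots> = \<mu>o A + \<mu>o A'" by (simp add: S_def)
  finally show ?thesis .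
qed

lemma closed_lambda: "closed F \<Longrightarrow> F \<in> lambda_system UNIV (Pow UNIV) \<mu>o"
  unfolding lambda_system_def
proof (intro CollectI conjI ballI)
  fix x assume "closed F"
  show "\<mu>o (F \<inter> x) + \<mu>o ((UNIV - F) \<inter> x) = \<mu>o x"
  proof (rule antisym)
    have "\<mu>o x = (INF G\<in>{G. open G \<and> x \<subseteq> G}. \<beta> G)" by (simp add: \<mu>o_def)
    moreover have "\<mu>o (F \<inter> x) + \<mu>o ((UNIV - F) \<inter> x) \<le> \<beta> G" if "open G" "x \<subseteq> G" for G
    proof -
      have "\<mu>o (F \<inter> x) + \<mu>o ((UNIV - F) \<inter> x) \<le> \<mu>o (F \<inter> G) + \<mu>o ((UNIV - F) \<inter> G)"
        using that by (intro add_mono \<mu>o_mono) auto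
      also have "\<dots> \<le> \<beta> G" using key \<open>closed F\<close> that by auto
      finally show ?thesis .
    qed
    ultimately show "\<mu>o (F \<inter> x) + \<mu>o ((UNIV - F) \<inter> x) \<le> \<mu>o x"
      by (auto intro!: INF_greatest)
    have "x = (F \<inter> x) \<union> ((UNIV - F) \<inter> x)" by auto
    then show "\<mu>o x \<le> \<mu>o (F \<inter> x) + \<mu>o ((UNIV - F) \<inter> x)"
      using \<mu>o_Un by metis
  qed
qed auto

lemma limit_measure:
  "\<exists>Q. prob_space Q \<and> sets Q = sets borel \<and>
     (\<forall>G. open G \<longrightarrow> emeasure Q G \<le> liminf (\<lambda>n. emeasure (P (r n)) G))"
proof -
  interpret S: sigma_algebra UNIV "Pow UNIV" by (rule sigma_algebra_Pow)
  have ms: "measure_space UNIV (lambda_system UNIV (Pow UNIV) \<mu>o) \<mu>o"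
    using S.caratheodory_lemma[OF outer] by simp
  then have sa: "sigma_algebra UNIV (lambda_system UNIV (Pow UNIV) \<mu>o)"
    by (simp add: measure_space_def)
  have sb: "sets (P 0) = sigma_sets UNIV (Collect closed)"
    unfolding sets_P by (subst borel_eq_closed) (simp add: sets_measure_of)
  have "sets (P 0) \<subseteq> lambda_system UNIV (Pow UNIV) \<mu>o"
    unfolding sb using closed_lambda by (intro sigma_algebra.sigma_sets_subset[OF sa]) auto
  moreover have sa2: "sigma_algebra UNIV (sets (P 0))"
    using sets.sigma_algebra_axioms[of "P 0"] sets_eq_imp_space_eq[OF sets_P[of 0]] by simp
  ultimately have ms2: "measure_space UNIV (sets (P 0)) \<mu>o"
    by (intro measure_down[OF ms])
  define Q where "Q = measure_of UNIV (sets (P 0)) \<mu>o"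
  have sQ: "sets Q = sets borel"
    unfolding Q_def using sigma_algebra.sets_measure_of_eq[OF sa2] sets_P by simp
  have eQ: "emeasure Q A = \<mu>o A" if "A \<in> sets borel" for A
    unfolding Q_def using ms2 that sets_P[of 0]
    by (intro emeasure_measure_of_sigma) (auto simp: measure_space_def)
  have spQ: "space Q = UNIV" using sets_eq_imp_space_eq[OF sQ] by simp
  have ge: "ennreal (1 - inverse (real (Suc i))) \<le> \<beta> UNIV" for i
  proof -
    obtain H where H: "H \<in> HH" "K i \<subseteq> H"
      using approx[of "K i" i UNIV] K_compact compact_imp_closed by blast
    have "1 - inverse (real (Suc i)) \<le> \<alpha> H"
    proof (rule LIMSEQ_le_const[OF \<alpha>_lim[OF H(1)]], intro exI allI impI)
      fix n
      interpret prob_space "P (r n)" by (rule prob)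
      have "1 - inverse (real (Suc i)) \<le> measure (P (r n)) (K i)"
        using K_meas[of i "r n"] by (simp add: divide_inverse)
      also have "\<dots> \<le> measure (P (r n)) H" using H HH_sets by (intro finite_measure_mono) auto
      finally show "1 - inverse (real (Suc i)) \<le> measure (P (r n)) H" .
    qed
    then have "ennreal (1 - inverse (real (Suc i))) \<le> ennreal (\<alpha> H)" by (rule ennreal_leI)
    also have "\<dots> \<le> \<beta> UNIV" using H by (intro \<alpha>_le_\<beta>) auto
    finally show ?thesis .
  qed
  have "(\<lambda>i. ennreal (1 - inverse (real (Suc i)))) \<longlonglongrightarrow> ennreal (1 - 0)"
    by (intro tendsto_ennrealI tendsto_diff tendsto_const LIMSEQ_inverse_real_of_nat)
  then have "1 \<le> \<beta> UNIV" using ge by (intro LIMSEQ_le_const2) auto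
  then have "\<beta> UNIV = 1" using \<beta>_le1[of UNIV] by auto
  then have "emeasure Q (space Q) = 1" using eQ[of UNIV] \<mu>o_open[of UNIV] spQ by simp
  then have pQ: "prob_space Q" by (rule prob_spaceI)
  have "emeasure Q G \<le> liminf (\<lambda>n. emeasure (P (r n)) G)" if "open G" for G
  proof -
    have "emeasure Q G = \<beta> G" using eQ[of G] \<mu>o_open[OF that] that by simp
    also have "\<dots> \<le> liminf (\<lambda>n. emeasure (P (r n)) G)"
      unfolding \<beta>_def
    proof (rule SUP_least)
      fix H assume "H \<in> {H\<in>HH. H \<subseteq> G}"
      then have H: "H \<in> HH" "H \<subseteq> G" by auto
      have "ennreal (\<alpha> H) = liminf (\<lambda>n. ennreal (measure (P (r n)) H))"
        by (rule lim_imp_Liminf[symmetric]) (auto intro!: tendsto_ennrealI \<alpha>_lim H)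
      also have "\<dots> \<le> liminf (\<lambda>n. emeasure (P (r n)) G)"
      proof (intro Liminf_mono always_eventually allI)
        fix n
        interpret prob_space "P (r n)" by (rule prob)
        show "ennreal (measure (P (r n)) H) \<le> emeasure (P (r n)) G"
          using H HH_sets that sets_P by (auto simp: emeasure_eq_measure[symmetric] intro!: emeasure_mono)
      qed
      finally show "ennreal (\<alpha> H) \<le> liminf (\<lambda>n. emeasure (P (r n)) G)" .
    qed
    finally show ?thesis .
  qed
  then show ?thesis using pQ sQ by blast
qed

end

theorem prokhorov:
  fixes P :: "nat \<Rightarrow> 'c::{metric_space,second_countable_topology} measure"
  assumes prob: "\<And>n. prob_space (P n)" and sets_P: "\<And>n. sets (P n) = sets borel"
    and tight: "\<And>e. e > 0 \<Longrightarrow> \<exists>K. compact K \<and> (\<forall>n. measure (P n) K \<ge> 1 - e)"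
  shows "\<exists>r Q. strict_mono r \<and> prob_space Q \<and> sets Q = sets borel \<and>
     (\<forall>G. open G \<longrightarrow> emeasure Q G \<le> liminf (\<lambda>n. emeasure (P (r n)) G))"
proof -
  have "\<exists>K. compact K \<and> (\<forall>n. measure (P n) K \<ge> 1 - 1 / Suc i)" for i
    by (rule tight) auto
  then obtain K0 where K0: "\<And>i. compact (K0 i)" "\<And>i n. measure (P n) (K0 i) \<ge> 1 - 1 / Suc i"
    by metis
  define K where "K i = (\<Union>j\<le>i. K0 j)" for i
  have Kc: "compact (K i)" for i unfolding K_def using K0 by (intro compact_UN) auto
  have Ki: "incseq K" unfolding K_def incseq_def by (meson UN_mono atMost_iff atMost_subset_iff order_refl)
  have Km: "measure (P n) (K i) \<ge> 1 - 1 / Suc i" for i n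
  proof -
    interpret prob_space "P n" by (rule prob)
    have "measure (P n) (K0 i) \<le> measure (P n) (K i)"
      using Kc[of i] sets_P[of n] compact_imp_closed unfolding K_def
      by (intro finite_measure_mono) auto
    then show ?thesis using K0(2)[of i n] by linarith
  qed
  obtain B :: "'c set set" where B: "countable B" "topological_basis B"
    using ex_countable_basis by blast
  interpret pb: prok_base P K B
    by (intro prok_base.intro prob sets_P Kc Ki Km B)
  define g where "g i n = measure (P n) (from_nat_into pb.HH i)" for i n
  have "g i n \<in> {0..1}" for i n
    unfolding g_def using prob_space.prob_le_1[OF prob] by auto
  then obtain d where d: "strict_mono d" "\<And>i. convergent (\<lambda>k. g i (d k))"
    using diag_convergent by blast
  interpret pr: prok P K B d
  proof unfold_locales
    fix H assume "H \<in> pb.HH"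
    then have "H = from_nat_into pb.HH (to_nat_on pb.HH H)"
      using pb.countable_HH by (simp add: from_nat_into_to_nat_on)
    then show "convergent (\<lambda>n. measure (P (d n)) H)"
      using d(2)[of "to_nat_on pb.HH H"] unfolding g_def by metis
  qed (rule d(1))
  show ?thesis using pr.limit_measure d(1) by blast
qed



lemma sets_pair_borel:
  fixes M :: "'a::second_countable_topology measure" and N :: "'b::second_countable_topology measure"
  assumes "sets M = sets borel" "sets N = sets borel"
  shows "sets (M \<Otimes>\<^sub>M N) = sets borel"
proof -
  have "sets (M \<Otimes>\<^sub>M N) = sets (borel \<Otimes>\<^sub>M borel)" by (rule sets_pair_measure_cong[OF assms])
  then show ?thesis by (simp only: borel_prod)
qed

lemma eventually_le_plus:
  fixes a :: ennreal
  assumes "a \<le> liminf x" "0 < d" "a \<noteq> \<infinity>"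
  shows "eventually (\<lambda>n. a \<le> x n + ennreal d) sequentially"
proof (cases "a \<le> ennreal d")
  case True
  then show ?thesis by (intro always_eventually allI) (simp add: add_increasing)
next
  case False
  then have "a - ennreal d < a"
    using assms(2,3) False by (intro ennreal_between) (auto simp: top.not_eq_extremum not_le intro: order_le_less_trans[OF zero_le])
  then have "a - ennreal d < liminf x" using assms(1) by (rule less_le_trans)
  then have "eventually (\<lambda>n. a - ennreal d < x n) sequentially" by (rule less_LiminfD)
  then show ?thesis
  proof eventually_elim
    case (elim n)
    then have "a < x n + ennreal d" using False by (subst minus_less_iff_ennreal[symmetric]) auto
    then show ?case by simp
  qed
qed

lemma prod_lsc_half:
  fixes Q :: "nat \<Rightarrow> 'c::{metric_space,second_countable_topology} measure" and Q0 :: "'c measure"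
  assumes prob: "\<And>n. prob_space (Q n)" and sets_Q: "\<And>n. sets (Q n) = sets borel"
    and prob0: "prob_space Q0" and sets0: "sets Q0 = sets borel"
    and lsc: "\<And>U. open U \<Longrightarrow> emeasure Q0 U \<le> liminf (\<lambda>n. emeasure (Q n) U)"
    and G: "open G"
  shows "emeasure (Q0 \<Otimes>\<^sub>M Q0) G \<le> liminf (\<lambda>n. emeasure (Q n \<Otimes>\<^sub>M Q0) G)"
proof -
  have psf: "pair_sigma_finite M Q0" if "prob_space M" for M :: "'c measure"
    using that prob0 by (simp add: pair_sigma_finite_def prob_space_imp_sigma_finite)
  have Gs: "G \<in> sets (M \<Otimes>\<^sub>M Q0)" if "sets M = sets borel" for M
    using G sets_pair_borel[OF that sets0] by auto
  define sec where "sec w = (\<lambda>z. (z, w)) -` G" for w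
  have sec_open: "open (sec w)" for w
    unfolding sec_def by (intro open_vimage G continuous_intros)
  have eq: "emeasure (M \<Otimes>\<^sub>M Q0) G = (\<integral>\<^sup>+ w. emeasure M (sec w) \<partial>Q0)"
    if "prob_space M" "sets M = sets borel" for M
    unfolding sec_def using pair_sigma_finite.emeasure_pair_measure_alt2[OF psf[OF that(1)] Gs[OF that(2)]] .
  have meas: "(\<lambda>w. emeasure M (sec w)) \<in> borel_measurable Q0"
    if "prob_space M" "sets M = sets borel" for M
    unfolding sec_def using pair_sigma_finite.measurable_emeasure_Pair2[OF psf[OF that(1)] Gs[OF that(2)]] .
  have "emeasure (Q0 \<Otimes>\<^sub>M Q0) G = (\<integral>\<^sup>+ w. emeasure Q0 (sec w) \<partial>Q0)"
    by (rule eq[OF prob0 sets0])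
  also have "\<dots> \<le> (\<integral>\<^sup>+ w. liminf (\<lambda>n. emeasure (Q n) (sec w)) \<partial>Q0)"
    by (intro nn_integral_mono lsc sec_open)
  also have "\<dots> \<le> liminf (\<lambda>n. \<integral>\<^sup>+ w. emeasure (Q n) (sec w) \<partial>Q0)"
    by (rule nn_integral_liminf) (rule meas[OF prob sets_Q])
  also have "\<dots> = liminf (\<lambda>n. emeasure (Q n \<Otimes>\<^sub>M Q0) G)"
    using eq[OF prob sets_Q] by presburger
  finally show ?thesis .
qed


lemma prod_lsc:
  fixes Q :: "nat \<Rightarrow> 'c::{metric_space,second_countable_topology} measure" and Q0 :: "'c measure"
  assumes prob: "\<And>n. prob_space (Q n)" and sets_Q: "\<And>n. sets (Q n) = sets borel"
    and prob0: "prob_space Q0" and sets0: "sets Q0 = sets borel"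
    and lsc: "\<And>U. open U \<Longrightarrow> emeasure Q0 U \<le> liminf (\<lambda>n. emeasure (Q n) U)"
    and G: "open G"
  shows "emeasure (Q0 \<Otimes>\<^sub>M Q0) G \<le> liminf (\<lambda>n. emeasure (Q n \<Otimes>\<^sub>M Q n) G)"
proof -
  obtain B :: "'c set set" where B: "countable B" "topological_basis B"
    using ex_countable_basis by blast
  have Bo: "U \<in> B \<Longrightarrow> open U" for U by (rule topological_basis_open[OF B(2)])
  define R where "R = {p \<in> B \<times> B. fst p \<times> snd p \<subseteq> G}"
  have Gu: "G = (\<Union>p\<in>R. fst p \<times> snd p)"
  proof (rule antisym)
    show "G \<subseteq> (\<Union>p\<in>R. fst p \<times> snd p)"
    proof
      fix x assume "x \<in> G"
      then obtain A C where AC: "open A" "open C" "x \<in> A \<times> C" "A \<times> C \<subseteq> G"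
        using G \<open>x \<in> G\<close> unfolding open_prod_def by metis
      have fx: "fst x \<in> A" "snd x \<in> C" using AC(3) by (auto simp: mem_Times_iff)
      obtain U where U: "U \<in> B" "fst x \<in> U" "U \<subseteq> A"
        by (rule topological_basisE[OF B(2) AC(1) fx(1)])
      obtain V where V: "V \<in> B" "snd x \<in> V" "V \<subseteq> C"
        by (rule topological_basisE[OF B(2) AC(2) fx(2)])
      have "(U, V) \<in> R" unfolding R_def using U V AC(4) by auto
      moreover have "x \<in> U \<times> V" using U V by (cases x) auto
      ultimately show "x \<in> (\<Union>p\<in>R. fst p \<times> snd p)" by force
    qed
  qed (auto simp: R_def)
  have sets2: "sets (M \<Otimes>\<^sub>M N) = sets borel" if "sets M = sets borel" "sets N = sets borel"
    for M N :: "'c measure"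
    by (rule sets_pair_borel[OF that])
  show ?thesis
  proof (cases "R = {}")
    case True
    then show ?thesis using Gu by simp
  next
    case False
    have cR: "countable R" unfolding R_def
      by (rule countable_subset[of _ "B \<times> B"]) (auto intro: countable_SIGMA B(1))
    define e where "e = from_nat_into R"
    have eR: "e i \<in> R" for i unfolding e_def using False by (rule from_nat_into)
    have Rr: "range e = R" unfolding e_def using False cR by (rule range_from_nat_into)
    have eB: "fst (e i) \<in> B" "snd (e i) \<in> B" for i using eR[of i] by (auto simp: R_def mem_Times_iff)
    define F where "F k = (\<Union>i<k. fst (e i) \<times> snd (e i))" for k
    have Fo: "open (F k)" for k
      unfolding F_def by (intro open_UN ballI open_Times Bo eB)
    have FG: "F k \<subseteq> G" for k unfolding F_def using eR by (auto simp: R_def)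
    have Finc: "incseq F" unfolding incseq_def F_def by (meson UN_mono lessThan_subset_iff order_refl)
    have FU: "(\<Union>k. F k) = G"
    proof
      show "(\<Union>k. F k) \<subseteq> G" using FG by auto
      show "G \<subseteq> (\<Union>k. F k)"
      proof
        fix x assume "x \<in> G"
        then obtain p where "p \<in> R" "x \<in> fst p \<times> snd p" using Gu by blast
        then obtain i where "p = e i" using Rr by blast
        then have "x \<in> F (Suc i)" unfolding F_def using \<open>x \<in> fst p \<times> snd p\<close> by auto
        then show "x \<in> (\<Union>k. F k)" by auto
      qed
    qed
    have "emeasure (Q0 \<Otimes>\<^sub>M Q0) G = (SUP k. emeasure (Q0 \<Otimes>\<^sub>M Q0) (F k))"
    proof -
      have "range F \<subseteq> sets (Q0 \<Otimes>\<^sub>M Q0)" using Fo sets2[OF sets0 sets0] by auto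
      from SUP_emeasure_incseq[OF this Finc] FU show ?thesis by simp
    qed
    also have "\<dots> \<le> liminf (\<lambda>n. emeasure (Q n \<Otimes>\<^sub>M Q n) G)"
    proof (rule SUP_least)
      fix k
      show "emeasure (Q0 \<Otimes>\<^sub>M Q0) (F k) \<le> liminf (\<lambda>n. emeasure (Q n \<Otimes>\<^sub>M Q n) G)"
      proof (rule ennreal_le_epsilon)
        fix \<delta> :: real assume "0 < \<delta>"
        define Os where "Os S = (\<Union>i\<in>S. snd (e i))" for S
        have Oo: "open (Os S)" for S unfolding Os_def by (intro open_UN ballI Bo eB)
        have fin0: "emeasure Q0 A \<noteq> \<infinity>" for A
          using prob_space.emeasure_le_1[OF prob0, of A] by (auto simp: top_unique)
        have ev: "eventually (\<lambda>n. \<forall>S\<in>Pow {..<k}. emeasure Q0 (Os S) \<le> emeasure (Q n) (Os S) + ennreal \<delta>) sequentially"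
          by (intro eventually_ball_finite ballI eventually_le_plus lsc Oo \<open>0 < \<delta>\<close> fin0) auto
        have "emeasure (Q0 \<Otimes>\<^sub>M Q0) (F k) \<le> liminf (\<lambda>n. emeasure (Q n \<Otimes>\<^sub>M Q0) (F k))"
          by (rule prod_lsc_half[OF prob sets_Q prob0 sets0 lsc Fo])
        also have "\<dots> \<le> liminf (\<lambda>n. emeasure (Q n \<Otimes>\<^sub>M Q n) G + ennreal \<delta>)"
        proof (rule Liminf_mono, use ev in eventually_elim)
          case (elim n)
          interpret Qn: prob_space "Q n" by (rule prob)
          interpret Q0: prob_space Q0 by (rule prob0)
          have Fs: "F k \<in> sets (M \<Otimes>\<^sub>M N)" if "sets M = sets borel" "sets N = sets borel"
            for M N :: "'c measure"
            using Fo sets2[OF that] by auto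
          have sec: "Pair z -` F k = Os {i\<in>{..<k}. z \<in> fst (e i)}" for z
            unfolding F_def Os_def by auto
          have "emeasure (Q n \<Otimes>\<^sub>M Q0) (F k) = (\<integral>\<^sup>+ z. emeasure Q0 (Pair z -` F k) \<partial>Q n)"
            by (rule sigma_finite_measure.emeasure_pair_measure_alt[OF _ Fs[OF sets_Q sets0]])
              (rule prob_space_imp_sigma_finite[OF prob0])
          also have "\<dots> \<le> (\<integral>\<^sup>+ z. emeasure (Q n) (Pair z -` F k) + ennreal \<delta> \<partial>Q n)"
            using elim by (intro nn_integral_mono) (auto simp only: sec)
          also have "\<dots> = (\<integral>\<^sup>+ z. emeasure (Q n) (Pair z -` F k) \<partial>Q n) + (\<integral>\<^sup>+ z. ennreal \<delta> \<partial>Q n)"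
            by (intro nn_integral_add sigma_finite_measure.measurable_emeasure_Pair[OF _ Fs[OF sets_Q sets_Q]]
                  prob_space_imp_sigma_finite[OF prob]) auto
          also have "(\<integral>\<^sup>+ z. ennreal \<delta> \<partial>Q n) = ennreal \<delta>"
            by (simp add: Qn.emeasure_space_1)
          also have "(\<integral>\<^sup>+ z. emeasure (Q n) (Pair z -` F k) \<partial>Q n) = emeasure (Q n \<Otimes>\<^sub>M Q n) (F k)"
            by (rule sigma_finite_measure.emeasure_pair_measure_alt[symmetric, OF _ Fs[OF sets_Q sets_Q]])
              (rule prob_space_imp_sigma_finite[OF prob])
          also have "\<dots> \<le> emeasure (Q n \<Otimes>\<^sub>M Q n) G"
            using FG G sets2[OF sets_Q sets_Q] by (intro emeasure_mono) auto
          finally show ?case by (simp add: add_right_mono)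
        qed
        also have "\<dots> = liminf (\<lambda>n. emeasure (Q n \<Otimes>\<^sub>M Q n) G) + ennreal \<delta>"
          by (rule Liminf_add_const) simp
        finally show "emeasure (Q0 \<Otimes>\<^sub>M Q0) (F k) \<le> liminf (\<lambda>n. emeasure (Q n \<Otimes>\<^sub>M Q n) G) + ennreal \<delta>" .
      qed
    qed
    finally show ?thesis .
  qed
qed



lemma min_max_exists:
  fixes f :: "real \<Rightarrow> real"
  assumes anti: "\<And>x y. 0 \<le> x \<Longrightarrow> x \<le> y \<Longrightarrow> f y \<le> f x"
    and f1: "\<And>x. f x \<le> 1"
    and rc: "\<And>x. 0 \<le> x \<Longrightarrow> (\<lambda>n. f (x + inverse (real (Suc n)))) \<longlonglongrightarrow> f x"
  shows "\<exists>e\<ge>0. \<forall>e'\<ge>0. max e (f e) \<le> max e' (f e')"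
proof -
  define S where "S = {e. 0 \<le> e \<and> f e \<le> e}"
  have "1 \<in> S" unfolding S_def using f1 by auto
  then have Sne: "S \<noteq> {}" by auto
  have bdd: "bdd_below S" unfolding S_def by (auto intro!: bdd_belowI[of _ 0])
  define s where "s = Inf S"
  have s0: "0 \<le> s" unfolding s_def using Sne by (intro cInf_greatest) (auto simp: S_def)
  have up: "e' \<in> S" if "e \<in> S" "e \<le> e'" for e e'
    using that anti[of e e'] unfolding S_def by auto
  have sn: "s + inverse (real (Suc n)) \<in> S" for n
  proof -
    have "Inf S < s + inverse (real (Suc n))" unfolding s_def by simp
    then obtain e where "e \<in> S" "e < s + inverse (real (Suc n))"
      using cInf_less_iff[OF Sne bdd] by auto
    then show ?thesis using up by auto
  qed
  have lim: "(\<lambda>n. s + inverse (real (Suc n))) \<longlonglongrightarrow> s + 0"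
    by (intro tendsto_add tendsto_const LIMSEQ_inverse_real_of_nat)
  have fs: "f s \<le> s"
    using LIMSEQ_le[OF rc[OF s0] lim[simplified]] sn unfolding S_def by auto
  show ?thesis
  proof (intro exI[of _ s] conjI allI impI s0)
    fix e' :: real assume e': "0 \<le> e'"
    show "max s (f s) \<le> max e' (f e')"
    proof (cases "s \<le> e'")
      case True then show ?thesis using fs by auto
    next
      case False
      have "s \<le> f e'"
      proof (rule ccontr)
        assume "\<not> s \<le> f e'"
        define \<delta> where "\<delta> = (max e' (f e') + s) / 2"
        have "e' < \<delta>" "\<delta> < s" "f e' < \<delta>" using False \<open>\<not> s \<le> f e'\<close> unfolding \<delta>_def by auto
        then have "f \<delta> \<le> \<delta>" using anti[OF e', of \<delta>] by auto
        then have "\<delta> \<in> S" using e' \<open>e' < \<delta>\<close> unfolding S_def by auto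
        then have "s \<le> \<delta>" unfolding s_def using bdd by (rule cInf_lower)
        then show False using \<open>\<delta> < s\<close> by auto
      qed
      then show ?thesis using fs by auto
    qed
  qed
qed

lemma distortion_gt_eq:
  "distortion_gt e = {p. e < \<bar>dist (fst (fst p)) (fst (snd p)) - dist (snd (fst p)) (snd (snd p))\<bar>}"
  unfolding distortion_gt_def by auto

lemma open_distortion_gt: "open (distortion_gt e)"
  unfolding distortion_gt_eq
  by (intro open_Collect_less continuous_intros)

lemma distortion_gt_anti: "e \<le> e' \<Longrightarrow> distortion_gt e' \<subseteq> distortion_gt e"
  unfolding distortion_gt_eq by auto

lemma distortion_gt_UN:
  "distortion_gt e = (\<Union>n. distortion_gt (e + inverse (real (Suc n))))"
proof
  show "distortion_gt e \<subseteq> (\<Union>n. distortion_gt (e + inverse (real (Suc n))))"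
  proof
    fix p assume "p \<in> distortion_gt e"
    then have "e < \<bar>dist (fst (fst p)) (fst (snd p)) - dist (snd (fst p)) (snd (snd p))\<bar>"
      (is "e < ?v") unfolding distortion_gt_eq by auto
    then obtain n where "inverse (real (Suc n)) < ?v - e"
      using reals_Archimedean by (metis diff_gt_0_iff_gt)
    then have "e + inverse (real (Suc n)) < ?v" by linarith
    then show "p \<in> (\<Union>n. distortion_gt (e + inverse (real (Suc n))))"
      unfolding distortion_gt_eq by blast
  qed
  show "(\<Union>n. distortion_gt (e + inverse (real (Suc n)))) \<subseteq> distortion_gt e"
  proof (intro UN_least)
    fix n
    have "e \<le> e + inverse (real (Suc n))" by simp
    then show "distortion_gt (e + inverse (real (Suc n))) \<subseteq> distortion_gt e"
      by (rule distortion_gt_anti)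
  qed
qed


lemma rc_measure:
  fixes M :: "(('a::metric_space \<times> 'b::metric_space) \<times> ('a \<times> 'b)) measure"
  assumes "prob_space M" "\<And>e. distortion_gt e \<in> sets M"
  shows "(\<lambda>n. measure M (distortion_gt (x + inverse (real (Suc n))))) \<longlonglongrightarrow> measure M (distortion_gt x)"
proof -
  interpret prob_space M by fact
  have "incseq (\<lambda>n. distortion_gt (x + inverse (real (Suc n))))"
  proof (rule incseq_SucI, rule distortion_gt_anti)
    fix n :: nat
    have "inverse (real (Suc (Suc n))) \<le> inverse (real (Suc n))"
      by (intro le_imp_inverse_le) auto
    then show "x + inverse (real (Suc (Suc n))) \<le> x + inverse (real (Suc n))" by simp
  qed
  moreover have "range (\<lambda>n. distortion_gt (x + inverse (real (Suc n)))) \<subseteq> sets M" using assms(2) by auto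
  ultimately have "(\<lambda>n. measure M (distortion_gt (x + inverse (real (Suc n))))) \<longlonglongrightarrow>
      measure M (\<Union>n. distortion_gt (x + inverse (real (Suc n))))"
    using finite_Lim_measure_incseq by blast
  then show ?thesis by (simp only: distortion_gt_UN[of x, symmetric])
qed

lemma part1:
  fixes \<pi> :: "('a::{metric_space,second_countable_topology} \<times> 'b::{metric_space,second_countable_topology}) measure"
  assumes p: "prob_space \<pi>" and s: "sets \<pi> = sets borel"
  shows "\<exists>\<epsilon>\<ge>0. \<forall>\<epsilon>'\<ge>0. eur_cost \<pi> \<epsilon> \<le> eur_cost \<pi> \<epsilon>'"
proof -
  let ?M = "\<pi> \<Otimes>\<^sub>M \<pi>"
  have pM: "prob_space ?M" using p by (rule prob_space_pair[OF _ p])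
  have sM: "sets ?M = sets borel" by (rule sets_pair_borel[OF s s])
  have Ds: "distortion_gt e \<in> sets ?M" for e unfolding sM by (rule borel_open[OF open_distortion_gt])
  interpret M: prob_space ?M by (rule pM)
  have "\<exists>e\<ge>0. \<forall>e'\<ge>0. max e (measure ?M (distortion_gt e)) \<le> max e' (measure ?M (distortion_gt e'))"
  proof (rule min_max_exists)
    show "measure ?M (distortion_gt y) \<le> measure ?M (distortion_gt x)" if "0 \<le> x" "x \<le> y" for x y
      using that Ds by (intro M.finite_measure_mono distortion_gt_anti) auto
    show "measure ?M (distortion_gt x) \<le> 1" for x by (rule M.prob_le_1)
    show "(\<lambda>n. measure ?M (distortion_gt (x + inverse (real (Suc n))))) \<longlonglongrightarrow> measure ?M (distortion_gt x)"
      for x by (rule rc_measure[OF pM Ds])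
  qed
  then show ?thesis unfolding eur_cost_def by auto
qed

lemma eur_cost_nonneg: "0 \<le> e \<Longrightarrow> 0 \<le> eur_cost \<pi> e"
  unfolding eur_cost_def by auto

lemma couplingsD:
  assumes "\<pi> \<in> couplings mX mY"
  shows "prob_space \<pi>" "sets \<pi> = sets borel" "distr \<pi> mX fst = mX" "distr \<pi> mY snd = mY"
  using assms unfolding couplings_def by auto

lemma couplings_nonempty:
  fixes mX :: "'a::polish_space measure" and mY :: "'b::polish_space measure"
  assumes X: "mm_space mX" and Y: "mm_space mY"
  shows "mX \<Otimes>\<^sub>M mY \<in> couplings mX mY"
proof -
  have pX: "prob_space mX" and sX: "sets mX = sets borel" using X unfolding mm_space_def by auto
  have pY: "prob_space mY" and sY: "sets mY = sets borel" using Y unfolding mm_space_def by auto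
  interpret X: prob_space mX by (rule pX)
  interpret Y: prob_space mY by (rule pY)
  have "distr (mX \<Otimes>\<^sub>M mY) mX fst = mX" by (rule Y.distr_pair_fst)
  moreover have "distr (mX \<Otimes>\<^sub>M mY) mY snd = mY"
  proof (intro measure_eqI)
    fix A assume A: "A \<in> sets (distr (mX \<Otimes>\<^sub>M mY) mY snd)"
    from A have "emeasure (distr (mX \<Otimes>\<^sub>M mY) mY snd) A = emeasure (mX \<Otimes>\<^sub>M mY) (space mX \<times> A)"
      by (auto simp add: emeasure_distr space_pair_measure dest: sets.sets_into_space intro!: arg_cong2[where f=emeasure])
    with A show "emeasure (distr (mX \<Otimes>\<^sub>M mY) mY snd) A = emeasure mY A"
      by (simp add: Y.emeasure_pair_measure_Times X.emeasure_space_1)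
  qed simp
  ultimately show ?thesis unfolding couplings_def
    using prob_space_pair[OF pX pY] sets_pair_borel[OF sX sY] by auto
qed


lemma inner_compact:
  fixes M :: "'a::polish_space measure"
  assumes p: "prob_space M" and s: "sets M = sets borel" and e: "0 < e"
  shows "\<exists>K. compact K \<and> measure M (UNIV - K) < e"
proof -
  interpret prob_space M by (rule p)
  have sp: "space M = UNIV" using sets_eq_imp_space_eq[OF s] by simp
  have "emeasure M UNIV = (SUP K \<in> {K. K \<subseteq> UNIV \<and> compact K}. emeasure M K)"
    by (rule inner_regular[OF s]) (auto simp: sp)
  moreover have "emeasure M UNIV = 1" using emeasure_space_1 sp by simp
  ultimately have "\<exists>K\<in>{K. K \<subseteq> UNIV \<and> compact K}. 1 < emeasure M K + ennreal e"
    by (intro SUP_approx_ennreal[OF e]) (auto intro: compact_empty)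
  then obtain K where K: "compact K" "1 < emeasure M K + ennreal e" by auto
  have Ks: "K \<in> sets M" unfolding s by (rule borel_closed[OF compact_imp_closed[OF K(1)]])
  then have "1 < measure M K + e" using K(2) e
    by (simp add: emeasure_eq_measure ennreal_plus[symmetric] del: ennreal_plus)
  moreover have "measure M (UNIV - K) = 1 - measure M K"
    using prob_compl[OF Ks] sp by simp
  ultimately show ?thesis using K(1) by auto
qed

lemma tight_couplings:
  fixes mX :: "'a::polish_space measure" and mY :: "'b::polish_space measure"
  assumes X: "mm_space mX" and Y: "mm_space mY" and d: "0 < \<delta>"
  shows "\<exists>K. compact K \<and> (\<forall>\<pi>\<in>couplings mX mY. measure \<pi> K \<ge> 1 - \<delta>)"
proof -
  have pX: "prob_space mX" and sX: "sets mX = sets borel" using X unfolding mm_space_def by auto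
  have pY: "prob_space mY" and sY: "sets mY = sets borel" using Y unfolding mm_space_def by auto
  obtain KX where KX: "compact KX" "measure mX (UNIV - KX) < \<delta>/2"
    using inner_compact[OF pX sX, of "\<delta>/2"] d by auto
  obtain KY where KY: "compact KY" "measure mY (UNIV - KY) < \<delta>/2"
    using inner_compact[OF pY sY, of "\<delta>/2"] d by auto
  have "measure \<pi> (KX \<times> KY) \<ge> 1 - \<delta>" if \<pi>: "\<pi> \<in> couplings mX mY" for \<pi>
  proof -
    note c = couplingsD[OF \<pi>]
    interpret prob_space \<pi> by (rule c(1))
    have sp: "space \<pi> = UNIV" using sets_eq_imp_space_eq[OF c(2)] by simp
    have mf: "fst \<in> measurable \<pi> mX"
      by (subst measurable_cong_sets[OF c(2) sX])
        (rule borel_measurable_continuous_onI[OF continuous_on_fst[OF continuous_on_id]])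
    have ms: "snd \<in> measurable \<pi> mY"
      by (subst measurable_cong_sets[OF c(2) sY])
        (rule borel_measurable_continuous_onI[OF continuous_on_snd[OF continuous_on_id]])
    have KXs: "UNIV - KX \<in> sets mX"
      unfolding sX by (rule borel_open[OF open_Diff[OF open_UNIV compact_imp_closed[OF KX(1)]]])
    have KYs: "UNIV - KY \<in> sets mY"
      unfolding sY by (rule borel_open[OF open_Diff[OF open_UNIV compact_imp_closed[OF KY(1)]]])
    have e1: "measure \<pi> (fst -` (UNIV - KX)) = measure mX (UNIV - KX)"
      using measure_distr[OF mf KXs] c(3) sp by simp
    have e2: "measure \<pi> (snd -` (UNIV - KY)) = measure mY (UNIV - KY)"
      using measure_distr[OF ms KYs] c(4) sp by simp
    have s1: "fst -` (UNIV - KX) \<in> sets \<pi>" using measurable_sets[OF mf KXs] sp by simp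
    have s2: "snd -` (UNIV - KY) \<in> sets \<pi>" using measurable_sets[OF ms KYs] sp by simp
    have sK: "KX \<times> KY \<in> sets \<pi>"
      unfolding c(2) by (rule borel_closed[OF compact_imp_closed[OF compact_Times[OF KX(1) KY(1)]]])
    have "measure \<pi> (UNIV - KX \<times> KY) \<le> measure \<pi> (fst -` (UNIV - KX) \<union> snd -` (UNIV - KY))"
      using s1 s2 by (intro finite_measure_mono) auto
    also have "\<dots> \<le> measure \<pi> (fst -` (UNIV - KX)) + measure \<pi> (snd -` (UNIV - KY))"
      using s1 s2 by (rule measure_Un_le)
    finally have "measure \<pi> (UNIV - KX \<times> KY) < \<delta>" using e1 e2 KX KY by simp
    moreover have "measure \<pi> (UNIV - KX \<times> KY) = 1 - measure \<pi> (KX \<times> KY)"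
      using prob_compl[OF sK] sp by simp
    ultimately show ?thesis by simp
  qed
  then show ?thesis using KX KY by (intro exI[of _ "KX \<times> KY"]) (auto intro: compact_Times)
qed

lemma marginal_lsc:
  fixes P :: "('z::{metric_space,second_countable_topology}) measure" and M :: "'c::polish_space measure"
  assumes pP: "prob_space P" and sP: "sets P = sets borel"
    and pM: "prob_space M" and sM: "sets M = sets borel"
    and sQ: "\<And>n. sets (Q n) = sets borel" and dQ: "\<And>n. distr (Q n) M f = M"
    and f: "continuous_on UNIV f"
    and lsc: "\<And>G. open G \<Longrightarrow> emeasure P G \<le> liminf (\<lambda>n. emeasure (Q n) G)"
  shows "distr P M f = M"
proof -
  interpret P: prob_space P by (rule pP)
  interpret M: prob_space M by (rule pM)
  have spP: "space P = UNIV" using sets_eq_imp_space_eq[OF sP] by simp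
  have spM: "space M = UNIV" using sets_eq_imp_space_eq[OF sM] by simp
  have spQ: "space (Q n) = UNIV" for n using sets_eq_imp_space_eq[OF sQ[of n]] by simp
  have fb: "f \<in> borel_measurable borel" by (rule borel_measurable_continuous_onI[OF f])
  have fP: "f \<in> measurable P M" by (subst measurable_cong_sets[OF sP sM]) (rule fb)
  have fQ: "f \<in> measurable (Q n) M" for n by (subst measurable_cong_sets[OF sQ sM]) (rule fb)
  have le: "emeasure P (f -` A) \<le> emeasure M A" if A: "A \<in> sets borel" for A
  proof -
    have "emeasure M A = (INF U \<in> {U. A \<subseteq> U \<and> open U}. emeasure M U)"
      by (rule outer_regular[OF sM]) (auto simp: A)
    moreover have "emeasure P (f -` A) \<le> emeasure M U" if U: "A \<subseteq> U" "open U" for U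
    proof -
      have oU: "open (f -` U)" using U(2) f by (rule open_vimage)
      have "emeasure P (f -` A) \<le> emeasure P (f -` U)"
        using U oU sP by (intro emeasure_mono) auto
      also have "\<dots> \<le> liminf (\<lambda>n. emeasure (Q n) (f -` U))" by (rule lsc[OF oU])
      also have "(\<lambda>n. emeasure (Q n) (f -` U)) = (\<lambda>n. emeasure M U)"
      proof
        fix n
        have "emeasure M U = emeasure (distr (Q n) M f) U" using dQ[of n] by simp
        also have "\<dots> = emeasure (Q n) (f -` U)"
          using emeasure_distr[OF fQ, of U] U sM spQ by auto
        finally show "emeasure (Q n) (f -` U) = emeasure M U" by simp
      qed
      also have "liminf (\<lambda>n. emeasure M U) = emeasure M U" by (simp add: Liminf_const)
      finally show ?thesis .
    qed
    ultimately show ?thesis by (auto intro!: INF_greatest)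
  qed
  show ?thesis
  proof (rule measure_eqI)
    show "sets (distr P M f) = sets M" by simp
    fix A assume "A \<in> sets (distr P M f)"
    then have A: "A \<in> sets borel" using sM by simp
    have As: "f -` A \<in> sets P" using measurable_sets[OF fP, of A] A sM spP by simp
    have A's: "f -` (UNIV - A) \<in> sets P" using measurable_sets[OF fP, of "UNIV - A"] A sM spP by auto
    have "measure P (f -` A) \<le> measure M A"
      using le[OF A] by (simp add: P.emeasure_eq_measure M.emeasure_eq_measure)
    moreover have "measure P (f -` (UNIV - A)) \<le> measure M (UNIV - A)"
      using le[of "UNIV - A"] A by (simp add: P.emeasure_eq_measure M.emeasure_eq_measure)
    moreover have "measure P (f -` (UNIV - A)) = 1 - measure P (f -` A)"
      using P.prob_compl[OF As] spP by (simp add: vimage_Diff)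
    moreover have "measure M (UNIV - A) = 1 - measure M A"
      using M.prob_compl[of A] A sM spM by simp
    ultimately have "measure P (f -` A) = measure M A" by linarith
    then show "emeasure (distr P M f) A = emeasure M A"
      using emeasure_distr[OF fP, of A] A sM spP
      by (simp add: P.emeasure_eq_measure M.emeasure_eq_measure)
  qed
qed


theorem theorem6p3:
  fixes mX :: "'a::polish_space measure" and mY :: "'b::polish_space measure"
  assumes "mm_space mX" and "mm_space mY"
  shows "(\<forall>\<pi> \<in> couplings mX mY. \<exists>\<epsilon>\<ge>0. \<forall>\<epsilon>'\<ge>0. eur_cost \<pi> \<epsilon> \<le> eur_cost \<pi> \<epsilon>')
    \<and> (\<exists>\<pi> \<in> couplings mX mY. \<exists>\<epsilon>\<ge>0.
         eur_cost \<pi> \<epsilon> = d_Eur mX mY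
       \<and> (\<forall>\<pi>' \<in> couplings mX mY. \<forall>\<epsilon>'\<ge>0. eur_cost \<pi> \<epsilon> \<le> eur_cost \<pi>' \<epsilon>'))"
proof -
  let ?C = "couplings mX mY"
  let ?d = "d_Eur mX mY"
  have pX: "prob_space mX" and sX: "sets mX = sets borel" using assms(1) unfolding mm_space_def by auto
  have pY: "prob_space mY" and sY: "sets mY = sets borel" using assms(2) unfolding mm_space_def by auto
  have Cne: "?C \<noteq> {}" using couplings_nonempty[OF assms] by auto
  define V where "V \<pi> = (INF \<epsilon>\<in>{0..}. eur_cost \<pi> \<epsilon>)" for \<pi> :: "('a \<times> 'b) measure"
  have dV: "?d = (INF \<pi>\<in>?C. V \<pi>)" by (simp add: d_Eur_def V_def)
  have bddV: "bdd_below ((\<lambda>\<epsilon>. eur_cost \<pi> \<epsilon>) ` {0..})" for \<pi>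
    using eur_cost_nonneg by (auto intro!: bdd_belowI[of _ 0])
  have V0: "0 \<le> V \<pi>" for \<pi>
    unfolding V_def by (rule cINF_greatest) (auto intro: eur_cost_nonneg)
  have Vle: "V \<pi> \<le> eur_cost \<pi> \<epsilon>" if "0 \<le> \<epsilon>" for \<pi> \<epsilon>
    unfolding V_def using that by (intro cINF_lower[OF bddV]) auto
  have bddD: "bdd_below (V ` ?C)" using V0 by (auto intro!: bdd_belowI[of _ 0])
  have dle: "?d \<le> eur_cost \<pi> \<epsilon>" if "\<pi> \<in> ?C" "0 \<le> \<epsilon>" for \<pi> \<epsilon>
  proof -
    have "?d \<le> V \<pi>" unfolding dV using that by (intro cINF_lower[OF bddD]) auto
    then show ?thesis using Vle[OF that(2), of \<pi>] by linarith
  qed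
  have d0: "0 \<le> ?d" unfolding dV using Cne V0 by (intro cINF_greatest) auto
  have part1': "\<forall>\<pi> \<in> ?C. \<exists>\<epsilon>\<ge>0. \<forall>\<epsilon>'\<ge>0. eur_cost \<pi> \<epsilon> \<le> eur_cost \<pi> \<epsilon>'"
    using part1 couplingsD by blast
  have ne0: "{0::real..} \<noteq> {}" by auto
  have "\<exists>\<pi>\<in>?C. \<exists>\<epsilon>\<ge>0. eur_cost \<pi> \<epsilon> < ?d + inverse (real (Suc n))" for n
  proof -
    have "(INF \<pi>\<in>?C. V \<pi>) < ?d + inverse (real (Suc n))" unfolding dV[symmetric] by simp
    then obtain \<pi> where \<pi>: "\<pi> \<in> ?C" "V \<pi> < ?d + inverse (real (Suc n))"
      using cINF_less_iff[OF Cne bddD] by auto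
    then obtain \<epsilon> where "\<epsilon> \<in> {0..}" "eur_cost \<pi> \<epsilon> < ?d + inverse (real (Suc n))"
      using cINF_less_iff[OF ne0 bddV[of \<pi>]] unfolding V_def by auto
    then show ?thesis using \<pi> by auto
  qed
  then obtain \<pi>s \<epsilon>s where seq: "\<And>n. \<pi>s n \<in> ?C" "\<And>n. 0 \<le> \<epsilon>s n"
      "\<And>n. eur_cost (\<pi>s n) (\<epsilon>s n) < ?d + inverse (real (Suc n))"
    by metis
  note cs = couplingsD[OF seq(1)]
  have tight: "\<exists>K. compact K \<and> (\<forall>n. measure (\<pi>s n) K \<ge> 1 - \<delta>)" if "0 < \<delta>" for \<delta>
    using tight_couplings[OF assms that] seq(1) by blast
  obtain r P where rP: "strict_mono r" "prob_space P" "sets P = sets borel"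
    "\<And>G. open G \<Longrightarrow> emeasure P G \<le> liminf (\<lambda>n. emeasure (\<pi>s (r n)) G)"
    using prokhorov[of \<pi>s, OF cs(1) cs(2) tight] by blast
  have "range (\<lambda>n. \<epsilon>s (r n)) \<subseteq> {0..?d + 1}"
  proof safe
    fix n
    have "\<epsilon>s (r n) \<le> eur_cost (\<pi>s (r n)) (\<epsilon>s (r n))" unfolding eur_cost_def by simp
    also have "\<dots> < ?d + inverse (real (Suc (r n)))" by (rule seq(3))
    also have "\<dots> \<le> ?d + 1" by (simp add: inverse_le_1_iff)
    finally show "\<epsilon>s (r n) \<in> {0..?d + 1}" using seq(2) by auto
  qed
  then have "bounded (range (\<lambda>n. \<epsilon>s (r n)))" by (rule bounded_subset[OF bounded_closed_interval])
  then obtain e0 s where s: "strict_mono s" "((\<lambda>n. \<epsilon>s (r n)) \<circ> s) \<longlonglongrightarrow> e0"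
    using bounded_imp_convergent_subsequence by blast
  define t where "t = r \<circ> s"
  have t: "strict_mono t" unfolding t_def using rP(1) s(1) by (rule strict_mono_o)
  have et: "(\<lambda>n. \<epsilon>s (t n)) \<longlonglongrightarrow> e0" using s(2) unfolding t_def by (simp add: o_def)
  have lscQ: "emeasure P G \<le> liminf (\<lambda>n. emeasure (\<pi>s (t n)) G)" if "open G" for G
  proof -
    have "emeasure P G \<le> liminf (\<lambda>n. emeasure (\<pi>s (r n)) G)" by (rule rP(4)[OF that])
    also have "\<dots> \<le> liminf ((\<lambda>n. emeasure (\<pi>s (r n)) G) \<circ> s)" by (rule liminf_subseq_mono[OF s(1)])
    finally show ?thesis by (simp add: t_def o_def)
  qed
  have PC: "P \<in> ?C"
  proof -
    have "distr P mX fst = mX"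
      by (rule marginal_lsc[OF rP(2,3) pX sX cs(2) cs(3) continuous_on_fst[OF continuous_on_id] rP(4)])
    moreover have "distr P mY snd = mY"
      by (rule marginal_lsc[OF rP(2,3) pY sY cs(2) cs(4) continuous_on_snd[OF continuous_on_id] rP(4)])
    ultimately show ?thesis unfolding couplings_def using rP(2,3) by auto
  qed
  have ebound: "\<epsilon>s (t n) \<le> ?d + inverse (real (Suc n))" for n
  proof -
    have "\<epsilon>s (t n) \<le> eur_cost (\<pi>s (t n)) (\<epsilon>s (t n))" unfolding eur_cost_def by simp
    also have "\<dots> < ?d + inverse (real (Suc (t n)))" by (rule seq(3))
    also have "\<dots> \<le> ?d + inverse (real (Suc n))"
      using seq_suble[OF t, of n] by (simp add: le_imp_inverse_le)
    finally show ?thesis by simp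
  qed
  have cbound: "measure (\<pi>s (t n) \<Otimes>\<^sub>M \<pi>s (t n)) (distortion_gt (\<epsilon>s (t n))) \<le> ?d + inverse (real (Suc n))" for n
  proof -
    have "measure (\<pi>s (t n) \<Otimes>\<^sub>M \<pi>s (t n)) (distortion_gt (\<epsilon>s (t n))) \<le> eur_cost (\<pi>s (t n)) (\<epsilon>s (t n))"
      unfolding eur_cost_def by simp
    also have "\<dots> < ?d + inverse (real (Suc (t n)))" by (rule seq(3))
    also have "\<dots> \<le> ?d + inverse (real (Suc n))"
      using seq_suble[OF t, of n] by (simp add: le_imp_inverse_le)
    finally show ?thesis by simp
  qed
  have limd: "(\<lambda>n. ?d + inverse (real (Suc n))) \<longlonglongrightarrow> ?d"
    using tendsto_add[OF tendsto_const LIMSEQ_inverse_real_of_nat, of ?d] by simp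
  have e0: "0 \<le> e0" using seq(2) by (intro LIMSEQ_le_const[OF et]) auto
  have e0d: "e0 \<le> ?d" using ebound by (intro LIMSEQ_le[OF et limd]) auto
  let ?PP = "P \<Otimes>\<^sub>M P"
  have pPP: "prob_space ?PP" by (rule prob_space_pair[OF rP(2) rP(2)])
  have sPP: "sets ?PP = sets borel" by (rule sets_pair_borel[OF rP(3) rP(3)])
  have DsPP: "distortion_gt e \<in> sets ?PP" for e unfolding sPP by (rule borel_open[OF open_distortion_gt])
  have fle: "measure ?PP (distortion_gt e) \<le> ?d" if "e0 < e" for e
  proof -
    have ev: "eventually (\<lambda>n. \<epsilon>s (t n) < e) sequentially" by (rule order_tendstoD(2)[OF et that])
    have "emeasure ?PP (distortion_gt e) \<le> liminf (\<lambda>n. emeasure (\<pi>s (t n) \<Otimes>\<^sub>M \<pi>s (t n)) (distortion_gt e))"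
      by (rule prod_lsc[OF cs(1) cs(2) rP(2) rP(3) lscQ open_distortion_gt])
    also have "\<dots> \<le> liminf (\<lambda>n. ennreal (?d + inverse (real (Suc n))))"
    proof (rule Liminf_mono, use ev in eventually_elim)
      case (elim n)
      let ?M = "\<pi>s (t n) \<Otimes>\<^sub>M \<pi>s (t n)"
      have pM: "prob_space ?M" by (rule prob_space_pair[OF cs(1) cs(1)])
      interpret M: prob_space ?M by (rule pM)
      have sM: "sets ?M = sets borel" by (rule sets_pair_borel[OF cs(2) cs(2)])
      have Ds: "distortion_gt x \<in> sets ?M" for x unfolding sM by (rule borel_open[OF open_distortion_gt])
      have "emeasure ?M (distortion_gt e) \<le> emeasure ?M (distortion_gt (\<epsilon>s (t n)))"
        using elim Ds by (intro emeasure_mono distortion_gt_anti) auto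
      also have "\<dots> = ennreal (measure ?M (distortion_gt (\<epsilon>s (t n))))" by (rule M.emeasure_eq_measure)
      also have "\<dots> \<le> ennreal (?d + inverse (real (Suc n)))" by (intro ennreal_leI cbound)
      finally show ?case .
    qed
    also have "\<dots> = ennreal ?d"
      by (rule lim_imp_Liminf[OF _ tendsto_ennrealI[OF limd]]) simp
    finally have "ennreal (measure ?PP (distortion_gt e)) \<le> ennreal ?d"
      using finite_measure.emeasure_eq_measure[OF prob_space.finite_measure[OF pPP]] by simp
    then show ?thesis using d0 by (simp add: ennreal_le_iff)
  qed
  have fe0: "measure ?PP (distortion_gt e0) \<le> ?d"
  proof (rule LIMSEQ_le_const2[OF rc_measure[OF pPP DsPP, of e0]], intro exI allI impI)
    fix n :: nat
    show "measure ?PP (distortion_gt (e0 + inverse (real (Suc n)))) \<le> ?d" by (rule fle) simp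
  qed
  have cost: "eur_cost P e0 \<le> ?d" unfolding eur_cost_def using e0d fe0 by simp
  have "eur_cost P e0 = ?d" using cost dle[OF PC e0] by simp
  moreover have "\<forall>\<pi>'\<in>?C. \<forall>\<epsilon>'\<ge>0. eur_cost P e0 \<le> eur_cost \<pi>' \<epsilon>'"
    using cost dle by force
  ultimately show ?thesis using part1' PC e0 by blast
qed


end
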